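(* Let $A$ be a nonempty finite set of $n$ alternatives and $\succ^w,\succ^o$ priority orderings on $A$. Each of the Walk-Open, Open-Walk, Rotating and Compromise choice rules (for $(\succ^w,\succ^o)$) satisfies capacity-filling, gross substitutes, and monotonicity. The Rotating choice rule satisfies the irrelevance of accepted alternatives and is (capacity-constrained) lexicographic, whereas the Walk-Open, Open-Walk and Compromise choice rules do not in general satisfy the irrelevance of accepted alternatives and are not in general (capacity-constrained) lexicographic (for each of them there exist $A$, $\succ^w$, $\succ^o$ for which it violates these).
   Context: Let $\mathcal{A}$ be the nonempty subsets of $A$. A choice rule assigns to each $(S,q)\in\mathcal{A}\times\{1,\dots,n\}$ a nonempty $C(S,q)\subseteq S$, $|C(S,q)|\le q$; $R(S,q)=S\setminus C(S,q)$. Given a list $(\succ_1,\dots,\succ_k)$ of priority orderings (strict linear orders on $A$), the lexicographic choice from $S$ chooses the $\succ_1$-highest element of $S$, then the $\succ_2$-highest among the remaining, etc., until $k$ are chosen or none is left. $C$ is (capacity-constrained) lexicographic if there is a profile $(\succ_1,\dots,\succ_n)$ such that $C(S,q)$ is the lexicographic choice from $S$ with $(\succ_1,\dots,\succ_q)$ for all $(S,q)$. The four rules are defined by taking, at capacity $q$, $C(S,q)$ to be the lexicographic choice from $S$ with the following list of length $q$ (w denotes $\succ^w$, o denotes $\succ^o$): Walk-Open: first $\lceil q/2\rceil$ entries w, remaining entries o. Open-Walk: first $\lceil q/2\rceil$ entries o, remaining entries w. Rotating: w, o, w, o, … (odd positions w, even positions o). Compromise: writing $q=4m+k$ with $k\in\{0,1,2,3\}$,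 the list consists of a block of w's, then a block of o's, then a block of w's, of lengths $(m,2m,m)$ if $k=0$, $(m+1,2m,m)$ if $k=1$, $(m+1,2m+1,m)$ if $k=2$, $(m+1,2m+1,m+1)$ if $k=3$. Capacity-filling: $|C(S,q)|=\min\{|S|,q\}$. Gross substitutes: for $a\neq b$ in $S$, $a\in C(S,q)\Rightarrow a\in C(S\setminus\{b\},q)$. Monotonicity: $C(S,q)\subseteq C(S,q+1)$ for $q\le n-1$. Irrelevance of accepted alternatives: for $S,S'\in\mathcal{A}$ and $q\le n-1$, $R(S,q)=R(S',q)$ implies $C(S,q+1)\cap R(S,q)=C(S',q+1)\cap R(S',q)$. *)

theory Defs
  imports Main
begin

text \<open>A priority ordering on A: a strict linear order on A (contained in A x A).
  Convention: (a, b) \<in> r means a has higher priority than b.\<close>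
definition priority_order :: "'a set \<Rightarrow> 'a rel \<Rightarrow> bool" where
  "priority_order A r \<longleftrightarrow> r \<subseteq> A \<times> A \<and> strict_linear_order_on A r"

definition top_elem :: "'a rel \<Rightarrow> 'a set \<Rightarrow> 'a" where
  "top_elem r S = (THE a. a \<in> S \<and> (\<forall>b\<in>S. b \<noteq> a \<longrightarrow> (a, b) \<in> r))"

fun lex_choice :: "'a rel list \<Rightarrow> 'a set \<Rightarrow> 'a set" where
  "lex_choice [] S = {}"
| "lex_choice (r # rs) S =
     (if S = {} then {} else insert (top_elem r S) (lex_choice rs (S - {top_elem r S})))"

definition walk_open_list :: "'a rel \<Rightarrow> 'a rel \<Rightarrow> nat \<Rightarrow> 'a rel list" where
  "walk_open_list w op q = replicate ((q + 1) div 2) w @ replicate (q - (q + 1) div 2) op"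

definition open_walk_list :: "'a rel \<Rightarrow> 'a rel \<Rightarrow> nat \<Rightarrow> 'a rel list" where
  "open_walk_list w op q = replicate ((q + 1) div 2) op @ replicate (q - (q + 1) div 2) w"

definition rotating_list :: "'a rel \<Rightarrow> 'a rel \<Rightarrow> nat \<Rightarrow> 'a rel list" where
  "rotating_list w op q = map (\<lambda>i. if even i then w else op) [0..<q]"

definition compromise_list :: "'a rel \<Rightarrow> 'a rel \<Rightarrow> nat \<Rightarrow> 'a rel list" where
  "compromise_list w op q =
     (let m = q div 4; k = q mod 4 in
        replicate (m + (if k \<ge> 1 then 1 else 0)) w
      @ replicate (2 * m + (if k \<ge> 2 then 1 else 0)) op
      @ replicate (m + (if k \<ge> 3 then 1 else 0)) w)"

definition walk_open :: "'a rel \<Rightarrow> 'a rel \<Rightarrow> 'a set \<Rightarrow> nat \<Rightarrow> 'a set" where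
  "walk_open w op S q = lex_choice (walk_open_list w op q) S"

definition open_walk :: "'a rel \<Rightarrow> 'a rel \<Rightarrow> 'a set \<Rightarrow> nat \<Rightarrow> 'a set" where
  "open_walk w op S q = lex_choice (open_walk_list w op q) S"

definition rotating :: "'a rel \<Rightarrow> 'a rel \<Rightarrow> 'a set \<Rightarrow> nat \<Rightarrow> 'a set" where
  "rotating w op S q = lex_choice (rotating_list w op q) S"

definition compromise :: "'a rel \<Rightarrow> 'a rel \<Rightarrow> 'a set \<Rightarrow> nat \<Rightarrow> 'a set" where
  "compromise w op S q = lex_choice (compromise_list w op q) S"

definition capacity_filling :: "'a set \<Rightarrow> ('a set \<Rightarrow> nat \<Rightarrow> 'a set) \<Rightarrow> bool" where
  "capacity_filling A C \<longleftrightarrow>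
     (\<forall>S q. S \<noteq> {} \<and> S \<subseteq> A \<and> 1 \<le> q \<and> q \<le> card A \<longrightarrow> card (C S q) = min (card S) q)"

definition gross_substitutes :: "'a set \<Rightarrow> ('a set \<Rightarrow> nat \<Rightarrow> 'a set) \<Rightarrow> bool" where
  "gross_substitutes A C \<longleftrightarrow>
     (\<forall>S q a b. S \<noteq> {} \<and> S \<subseteq> A \<and> 1 \<le> q \<and> q \<le> card A \<and> a \<in> S \<and> b \<in> S \<and> a \<noteq> b
        \<and> a \<in> C S q \<longrightarrow> a \<in> C (S - {b}) q)"

definition monotonicity :: "'a set \<Rightarrow> ('a set \<Rightarrow> nat \<Rightarrow> 'a set) \<Rightarrow> bool" where
  "monotonicity A C \<longleftrightarrow>
     (\<forall>S q. S \<noteq> {} \<and> S \<subseteq> A \<and> 1 \<le> q \<and> q \<le> card A - 1 \<longrightarrow> C S q \<subseteq> C S (q + 1))"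

definition rejected :: "('a set \<Rightarrow> nat \<Rightarrow> 'a set) \<Rightarrow> 'a set \<Rightarrow> nat \<Rightarrow> 'a set" where
  "rejected C S q = S - C S q"

definition irrelevance_accepted :: "'a set \<Rightarrow> ('a set \<Rightarrow> nat \<Rightarrow> 'a set) \<Rightarrow> bool" where
  "irrelevance_accepted A C \<longleftrightarrow>
     (\<forall>S S' q. S \<noteq> {} \<and> S \<subseteq> A \<and> S' \<noteq> {} \<and> S' \<subseteq> A \<and> 1 \<le> q \<and> q \<le> card A - 1
        \<and> rejected C S q = rejected C S' q
        \<longrightarrow> C S (q + 1) \<inter> rejected C S q = C S' (q + 1) \<inter> rejected C S' q)"

definition lexicographic :: "'a set \<Rightarrow> ('a set \<Rightarrow> nat \<Rightarrow> 'a set) \<Rightarrow> bool" where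
  "lexicographic A C \<longleftrightarrow>
     (\<exists>prof. length prof = card A \<and> (\<forall>r \<in> set prof. priority_order A r) \<and>
        (\<forall>S q. S \<noteq> {} \<and> S \<subseteq> A \<and> 1 \<le> q \<and> q \<le> card A \<longrightarrow> C S q = lex_choice (take q prof) S))"

end

theory Submission
  imports Defs
begin


lemma top_ex:
  assumes po: "priority_order A r" and fin: "finite S" and sub: "S \<subseteq> A" and ne: "S \<noteq> {}"
  shows "\<exists>a. a \<in> S \<and> (\<forall>b\<in>S. b \<noteq> a \<longrightarrow> (a, b) \<in> r)"
  using fin ne sub
proof (induction S rule: finite_ne_induct)
  case (singleton x) then show ?case by auto
next
  case (insert x F)
  then obtain t where t: "t \<in> F" "\<forall>b\<in>F. b \<noteq> t \<longrightarrow> (t, b) \<in> r" by auto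
  have tr: "trans r" and tot: "total_on A r"
    using po by (auto simp: priority_order_def strict_linear_order_on_def)
  have "x \<noteq> t" using t insert by auto
  then have "(x,t) \<in> r \<or> (t,x) \<in> r" using tot insert t unfolding total_on_def by auto
  then show ?case
  proof
    assume "(x,t) \<in> r"
    then show ?thesis using t tr by (intro exI[of _ x]) (auto dest: transD)
  next
    assume "(t,x) \<in> r"
    then show ?thesis using t by (intro exI[of _ t]) auto
  qed
qed

lemma top_unique:
  assumes po: "priority_order A r" and "a \<in> S" "\<forall>b\<in>S. b \<noteq> a \<longrightarrow> (a, b) \<in> r"
  shows "top_elem r S = a"
proof -
  have tr: "trans r" and ir: "irrefl r"
    using po by (auto simp: priority_order_def strict_linear_order_on_def)
  show ?thesis unfolding top_elem_def
  proof (rule the_equality)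
    show "a \<in> S \<and> (\<forall>b\<in>S. b \<noteq> a \<longrightarrow> (a, b) \<in> r)" using assms by auto
  next
    fix c assume c: "c \<in> S \<and> (\<forall>b\<in>S. b \<noteq> c \<longrightarrow> (c, b) \<in> r)"
    show "c = a"
    proof (rule ccontr)
      assume "c \<noteq> a"
      then have "(a,c) \<in> r" "(c,a) \<in> r" using c assms by auto
      then have "(a,a) \<in> r" using tr by (auto dest: transD)
      then show False using ir by (auto simp: irrefl_def)
    qed
  qed
qed

lemma top_prop:
  assumes "priority_order A r" "finite S" "S \<subseteq> A" "S \<noteq> {}"
  shows "top_elem r S \<in> S \<and> (\<forall>b\<in>S. b \<noteq> top_elem r S \<longrightarrow> (top_elem r S, b) \<in> r)"
proof -
  obtain a where a: "a \<in> S" "\<forall>b\<in>S. b \<noteq> a \<longrightarrow> (a, b) \<in> r" using top_ex[OF assms] by blast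
  then have "top_elem r S = a" using top_unique[OF assms(1)] by blast
  then show ?thesis using a by simp
qed

lemma top_sub:
  assumes "priority_order A r" "finite S" "S \<subseteq> A" "S \<noteq> {}" "top_elem r S \<in> S'" "S' \<subseteq> S"
  shows "top_elem r S' = top_elem r S"
  using top_prop[OF assms(1-4)] assms(5,6) by (intro top_unique[OF assms(1)]) auto

definition ok :: "'a set \<Rightarrow> 'a rel list \<Rightarrow> bool" where
  "ok A rs \<longleftrightarrow> (\<forall>r\<in>set rs. priority_order A r)"

lemma lex_empty[simp]: "lex_choice rs {} = {}"
  by (cases rs) auto

lemma lex_append: "lex_choice (xs @ ys) S = lex_choice xs S \<union> lex_choice ys (S - lex_choice xs S)"
proof (induction xs arbitrary: S)
  case Nil then show ?case by simp
next
  case (Cons r xs)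
  show ?case
  proof (cases "S = {}")
    case True then show ?thesis by simp
  next
    case False
    have e: "S - insert (top_elem r S) (lex_choice xs (S - {top_elem r S}))
       = S - {top_elem r S} - lex_choice xs (S - {top_elem r S})" by auto
    show ?thesis using False by (simp add: Cons.IH e)
  qed
qed

lemma lex_sub:
  assumes "ok A rs" "finite S" "S \<subseteq> A"
  shows "lex_choice rs S \<subseteq> S"
  using assms
proof (induction rs arbitrary: S)
  case Nil then show ?case by simp
next
  case (Cons r rs)
  show ?case
  proof (cases "S = {}")
    case True then show ?thesis by simp
  next
    case False
    have po: "priority_order A r" using Cons.prems by (simp add: ok_def)
    have "top_elem r S \<in> S" using top_prop[OF po Cons.prems(2,3) False] by simp
    moreover have "lex_choice rs (S - {top_elem r S}) \<subseteq> S - {top_elem r S}"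
      using Cons by (auto simp: ok_def)
    ultimately show ?thesis using False by auto
  qed
qed

lemma lex_card:
  assumes "ok A rs" "finite S" "S \<subseteq> A"
  shows "card (lex_choice rs S) = min (card S) (length rs)"
  using assms
proof (induction rs arbitrary: S)
  case Nil then show ?case by simp
next
  case (Cons r rs)
  show ?case
  proof (cases "S = {}")
    case True then show ?thesis by simp
  next
    case False
    have po: "priority_order A r" using Cons.prems by (simp add: ok_def)
    define t where "t = top_elem r S"
    have t: "t \<in> S" using top_prop[OF po Cons.prems(2,3) False] by (simp add: t_def)
    have okr: "ok A rs" using Cons.prems by (simp add: ok_def)
    have sub: "lex_choice rs (S - {t}) \<subseteq> S - {t}"
      using lex_sub[OF okr, of "S - {t}"] Cons.prems by auto
    have c: "card (lex_choice rs (S - {t})) = min (card (S - {t})) (length rs)"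
      using Cons.IH[OF okr, of "S - {t}"] Cons.prems by auto
    have fin: "finite (lex_choice rs (S - {t}))" using sub Cons.prems(2) finite_subset by blast
    have "card (lex_choice (r # rs) S) = Suc (card (lex_choice rs (S - {t})))"
      using False sub fin by (simp add: t_def[symmetric] card_insert_if) (auto)
    also have "\<dots> = min (card S) (length (r # rs))"
      using c t Cons.prems(2) card_Diff_singleton[OF t] card_gt_0_iff[of S] False by auto
    finally show ?thesis .
  qed
qed

lemma rem_mono:
  assumes "ok A rs" "finite S" "S \<subseteq> A" "S' \<subseteq> S"
  shows "S' - lex_choice rs S' \<subseteq> S - lex_choice rs S"
  using assms
proof (induction rs arbitrary: S S')
  case Nil then show ?case by simp
next
  case (Cons r rs)
  show ?case
  proof (cases "S' = {}")
    case True then show ?thesis by simp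
  next
    case False
    then have SnE: "S \<noteq> {}" using Cons.prems by auto
    have po: "priority_order A r" using Cons.prems by (simp add: ok_def)
    have okr: "ok A rs" using Cons.prems by (simp add: ok_def)
    define t where "t = top_elem r S"
    define t' where "t' = top_elem r S'"
    have t: "t \<in> S" using top_prop[OF po Cons.prems(2,3) SnE] by (simp add: t_def)
    have fS': "finite S'" using Cons.prems finite_subset by blast
    have t': "t' \<in> S'" using top_prop[OF po fS' _ False] Cons.prems by (simp add: t'_def)
    have "S' - {t'} \<subseteq> S - {t}"
    proof (cases "t \<in> S'")
      case True
      then have "t' = t" unfolding t'_def t_def using top_sub[OF po Cons.prems(2,3) SnE] Cons.prems(4)
        by (simp add: t_def)
      then show ?thesis using Cons.prems(4) by auto
    next
      case False
      then show ?thesis using Cons.prems(4) by auto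
    qed
    then have IH: "S' - {t'} - lex_choice rs (S' - {t'}) \<subseteq> S - {t} - lex_choice rs (S - {t})"
      using Cons.IH[OF okr, of "S - {t}" "S' - {t'}"] Cons.prems by auto
    show ?thesis using False SnE IH by (auto simp: t_def[symmetric] t'_def[symmetric])
  qed
qed

lemma lex_gross:
  assumes "ok A rs" "finite S" "S \<subseteq> A" "a \<in> S" "a \<noteq> b" "a \<in> lex_choice rs S"
  shows "a \<in> lex_choice rs (S - {b})"
  using rem_mono[OF assms(1-3), of "S - {b}"] assms(4-6) by auto

lemma lex_insert_mono:
  assumes "ok A (xs @ r # ys)" "finite S" "S \<subseteq> A"
  shows "lex_choice (xs @ ys) S \<subseteq> lex_choice (xs @ r # ys) S"
proof -
  define R where "R = S - lex_choice xs S"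
  have okr: "ok A ys" "priority_order A r" using assms(1) by (auto simp: ok_def)
  have fR: "finite R" "R \<subseteq> A" using assms(2,3) by (auto simp: R_def)
  have "lex_choice ys R \<subseteq> lex_choice (r # ys) R"
  proof (cases "R = {}")
    case True then show ?thesis by simp
  next
    case False
    define t where "t = top_elem r R"
    have "lex_choice ys R \<subseteq> R" using lex_sub[OF okr(1) fR] .
    moreover have "R - {t} - lex_choice ys (R - {t}) \<subseteq> R - lex_choice ys R"
      using rem_mono[OF okr(1) fR, of "R - {t}"] by auto
    ultimately have "lex_choice ys R \<subseteq> insert t (lex_choice ys (R - {t}))" by auto
    then show ?thesis using False by (simp add: t_def[symmetric])
  qed
  then show ?thesis unfolding lex_append R_def[symmetric] by blast
qed



lemma rep_snoc: "replicate (Suc j) x = replicate j x @ [x]"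
  by (induct j) auto

definition ins_step :: "(nat \<Rightarrow> 'a rel list) \<Rightarrow> bool" where
  "ins_step L \<longleftrightarrow> (\<forall>q. \<exists>xs r ys. L q = xs @ ys \<and> L (Suc q) = xs @ r # ys)"

lemma rule_props:
  assumes fin: "finite A" and pw: "priority_order A w" and po: "priority_order A op"
    and len: "\<And>q. length (L q) = q" and st: "\<And>q. set (L q) \<subseteq> {w, op}"
    and ins: "ins_step L" and C: "\<And>S q. C S q = lex_choice (L q) S"
  shows "capacity_filling A C \<and> gross_substitutes A C \<and> monotonicity A C"
proof -
  have ok: "ok A (L q)" for q using st[of q] pw po by (auto simp: ok_def)
  have "capacity_filling A C"
    unfolding capacity_filling_def C
  proof (intro allI impI)
    fix S q assume h: "S \<noteq> {} \<and> S \<subseteq> A \<and> 1 \<le> q \<and> q \<le> card A"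
    then have "finite S" using fin finite_subset by blast
    then show "card (lex_choice (L q) S) = min (card S) q"
      using lex_card[OF ok, of S q] h len[of q] by simp
  qed
  moreover have "gross_substitutes A C"
    unfolding gross_substitutes_def C
  proof (intro allI impI)
    fix S q a b assume h: "S \<noteq> {} \<and> S \<subseteq> A \<and> 1 \<le> q \<and> q \<le> card A \<and> a \<in> S \<and> b \<in> S \<and> a \<noteq> b
        \<and> a \<in> lex_choice (L q) S"
    then have "finite S" using fin finite_subset by blast
    then show "a \<in> lex_choice (L q) (S - {b})"
      using lex_gross[OF ok, of S a b] h by blast
  qed
  moreover have "monotonicity A C"
    unfolding monotonicity_def C
  proof (intro allI impI)
    fix S q assume h: "S \<noteq> {} \<and> S \<subseteq> A \<and> 1 \<le> q \<and> q \<le> card A - 1"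
    obtain xs r ys where e: "L q = xs @ ys" "L (Suc q) = xs @ r # ys"
      using ins unfolding ins_step_def by blast
    have "ok A (xs @ r # ys)" using ok[of "Suc q"] e by simp
    then show "lex_choice (L q) S \<subseteq> lex_choice (L (q + 1)) S"
      using lex_insert_mono[of A xs r ys S] e h finite_subset[OF _ fin] by simp
  qed
  ultimately show ?thesis by blast
qed

lemma wo_ins: "ins_step (walk_open_list w op)"
  unfolding ins_step_def
proof
  fix q :: nat
  consider j where "q = 2*j" | j where "q = 2*j+1" by (metis oddE evenE)
  then show "\<exists>xs r ys. walk_open_list w op q = xs @ ys \<and> walk_open_list w op (Suc q) = xs @ r # ys"
  proof cases
    case 1
    then show ?thesis
      by (intro exI[of _ "[]"] exI[of _ w] exI[of _ "walk_open_list w op q"])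
         (simp add: walk_open_list_def replicate_append_same)
  next
    case 2
    have "walk_open_list w op (Suc q) = walk_open_list w op q @ [op] @ []"
      using 2 by (simp add: walk_open_list_def replicate_append_same) 
    then show ?thesis by (intro exI[of _ "walk_open_list w op q"] exI[of _ op] exI[of _ "[]"]) simp
  qed
qed

lemma ow_ins: "ins_step (open_walk_list w op)"
  unfolding ins_step_def
proof
  fix q :: nat
  consider j where "q = 2*j" | j where "q = 2*j+1" by (metis oddE evenE)
  then show "\<exists>xs r ys. open_walk_list w op q = xs @ ys \<and> open_walk_list w op (Suc q) = xs @ r # ys"
  proof cases
    case 1
    then show ?thesis
      by (intro exI[of _ "[]"] exI[of _ op] exI[of _ "open_walk_list w op q"])
         (simp add: open_walk_list_def replicate_append_same)
  next
    case 2
    have "open_walk_list w op (Suc q) = open_walk_list w op q @ [w] @ []"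
      using 2 by (simp add: open_walk_list_def replicate_append_same) 
    then show ?thesis by (intro exI[of _ "open_walk_list w op q"] exI[of _ w] exI[of _ "[]"]) simp
  qed
qed

lemma rot_ins: "ins_step (rotating_list w op)"
  unfolding ins_step_def rotating_list_def
proof
  fix q
  show "\<exists>xs r ys. map (\<lambda>i. if even i then w else op) [0..<q] = xs @ ys \<and>
          map (\<lambda>i. if even i then w else op) [0..<Suc q] = xs @ r # ys"
    by (intro exI[of _ "map (\<lambda>i. if even i then w else op) [0..<q]"] exI[of _ "if even q then w else op"] exI[of _ "[]"]) simp
qed

lemma co_eq:
  assumes "k < 4"
  shows "compromise_list w op (4*m+k) = replicate (m + (if k \<ge> 1 then 1 else 0)) w
      @ replicate (2 * m + (if k \<ge> 2 then 1 else 0)) op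
      @ replicate (m + (if k \<ge> 3 then 1 else 0)) w"
proof -
  have "(4*m+k) div 4 = m" "(4*m+k) mod 4 = k" using assms by auto
  then show ?thesis unfolding compromise_list_def Let_def by simp
qed

lemma co_eqs:
  "compromise_list w op (4*m) = replicate m w @ replicate (2*m) op @ replicate m w"
  "compromise_list w op (4*m+1) = replicate (m+1) w @ replicate (2*m) op @ replicate m w"
  "compromise_list w op (4*m+2) = replicate (m+1) w @ replicate (2*m+1) op @ replicate m w"
  "compromise_list w op (4*m+3) = replicate (m+1) w @ replicate (2*m+1) op @ replicate (m+1) w"
  using co_eq[of 0 w op m] co_eq[of 1 w op m] co_eq[of 2 w op m] co_eq[of 3 w op m] by simp_all

lemma co_ins: "ins_step (compromise_list w op)"
  unfolding ins_step_def
proof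
  fix q :: nat
  define m where "m = q div 4"
  have e0: "q = 4*m + q mod 4" by (simp add: m_def)
  have "q mod 4 = 0 \<or> q mod 4 = 1 \<or> q mod 4 = 2 \<or> q mod 4 = 3" by arith
  then consider "q = 4*m" | "q = 4*m+1" | "q = 4*m+2" | "q = 4*m+3" using e0 by fastforce
  then show "\<exists>xs r ys. compromise_list w op q = xs @ ys \<and> compromise_list w op (Suc q) = xs @ r # ys"
  proof cases
    case 1
    have e: "Suc q = 4*m+1" using 1 by simp
    show ?thesis unfolding e unfolding 1 co_eqs
      by (intro exI[of _ "[]"] exI[of _ w] exI[of _ "replicate m w @ replicate (2*m) op @ replicate m w"])
         simp
  next
    case 2
    have e: "Suc q = 4*m+2" using 2 by simp
    show ?thesis unfolding e unfolding 2 co_eqs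
      by (intro exI[of _ "replicate (m+1) w"] exI[of _ op] exI[of _ "replicate (2*m) op @ replicate m w"])
         simp
  next
    case 3
    have e: "Suc q = 4*m+3" using 3 by simp
    show ?thesis unfolding e unfolding 3 co_eqs
      by (intro exI[of _ "replicate (m+1) w @ replicate (2*m+1) op"] exI[of _ w] exI[of _ "replicate m w"])
         (simp add: replicate_append_same)
  next
    case 4
    have e: "Suc q = 4*(m+1)" using 4 by simp
    show ?thesis unfolding e unfolding 4 co_eqs
      by (intro exI[of _ "replicate (m+1) w"] exI[of _ op] exI[of _ "replicate (2*m+1) op @ replicate (m+1) w"])
         simp
  qed
qed

lemma len_lists: "length (walk_open_list w op q) = q" "length (open_walk_list w op q) = q"
  "length (rotating_list w op q) = q" "length (compromise_list w op q) = q"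
     apply (auto simp: walk_open_list_def open_walk_list_def rotating_list_def)
  unfolding compromise_list_def Let_def by (simp; presburger)

lemma set_lists: "set (walk_open_list w op q) \<subseteq> {w, op}" "set (open_walk_list w op q) \<subseteq> {w, op}"
  "set (rotating_list w op q) \<subseteq> {w, op}" "set (compromise_list w op q) \<subseteq> {w, op}"
  by (auto simp: walk_open_list_def open_walk_list_def rotating_list_def compromise_list_def Let_def)

lemma lexi_iaa:
  assumes "lexicographic A C" shows "irrelevance_accepted A C"
proof -
  obtain prof where p: "length prof = card A"
    "\<forall>S q. S \<noteq> {} \<and> S \<subseteq> A \<and> 1 \<le> q \<and> q \<le> card A \<longrightarrow> C S q = lex_choice (take q prof) S"
    using assms unfolding lexicographic_def by blast
  show ?thesis unfolding irrelevance_accepted_def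
  proof (intro allI impI)
    fix S S' q assume h: "S \<noteq> {} \<and> S \<subseteq> A \<and> S' \<noteq> {} \<and> S' \<subseteq> A \<and> 1 \<le> q \<and> q \<le> card A - 1
        \<and> rejected C S q = rejected C S' q"
    have "q < length prof" using h p(1) by linarith
    then have tk: "take (q+1) prof = take q prof @ [prof ! q]"
      by (simp add: take_Suc_conv_app_nth)
    have key: "C T (q+1) \<inter> rejected C T q = lex_choice [prof ! q] (rejected C T q) \<inter> rejected C T q"
      if "T \<noteq> {}" "T \<subseteq> A" for T
    proof -
      have "C T (q+1) = lex_choice (take q prof) T \<union> lex_choice [prof ! q] (T - lex_choice (take q prof) T)"
      proof -
        have "q + 1 \<le> card A" using h by linarith
        then have "C T (q+1) = lex_choice (take (q+1) prof) T" using p(2) that by simp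
        then show ?thesis by (simp only: tk lex_append)
      qed
      moreover have "C T q = lex_choice (take q prof) T"
      proof -
        have "q \<le> card A" using h by linarith
        then show ?thesis using p(2) that h by simp
      qed
      ultimately show ?thesis unfolding rejected_def by auto
    qed
    show "C S (q + 1) \<inter> rejected C S q = C S' (q + 1) \<inter> rejected C S' q"
      using key[of S] key[of S'] h by simp
  qed
qed

lemma rot_lexi:
  assumes "priority_order A w" "priority_order A op"
  shows "lexicographic A (rotating w op)"
  unfolding lexicographic_def
  apply (rule exI[of _ "rotating_list w op (card A)"])
  using assms set_lists(3)[of w op "card A"]
  by (auto simp: len_lists rotating_def rotating_list_def take_map)



definition ordl :: "'a list \<Rightarrow> 'a rel" where
  "ordl xs = {(xs!i, xs!j) | i j. i < j \<and> j < length xs}"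

lemma ordl_po: assumes "distinct xs" shows "priority_order (set xs) (ordl xs)"
proof -
  have sub: "ordl xs \<subseteq> set xs \<times> set xs" by (auto simp: ordl_def)
  have tr: "trans (ordl xs)"
  proof (rule transI)
    fix x y z assume "(x,y) \<in> ordl xs" "(y,z) \<in> ordl xs"
    then obtain i j j' k where h: "x = xs!i" "y = xs!j" "i<j" "j<length xs" "y = xs!j'" "z = xs!k" "j'<k" "k < length xs"
      by (auto simp: ordl_def)
    then have "j = j'" using assms nth_eq_iff_index_eq by fastforce
    then show "(x,z) \<in> ordl xs" using h less_trans unfolding ordl_def by blast
  qed
  have ir: "irrefl (ordl xs)"
    unfolding irrefl_def ordl_def using assms nth_eq_iff_index_eq by fastforce
  have tot: "total_on (set xs) (ordl xs)"
  proof (rule total_onI)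
    fix x y assume "x \<in> set xs" "y \<in> set xs" "x \<noteq> y"
    then obtain i j where "i < length xs" "j < length xs" "x = xs!i" "y = xs!j" "i \<noteq> j"
      by (metis in_set_conv_nth)
    then consider "i < j" "j < length xs" "x = xs!i" "y = xs!j" | "j < i" "i < length xs" "x = xs!i" "y = xs!j"
      using nat_neq_iff by blast
    then show "(x, y) \<in> ordl xs \<or> (y, x) \<in> ordl xs" unfolding ordl_def
      by cases blast+
  qed
  show ?thesis using sub tr ir tot by (simp add: priority_order_def strict_linear_order_on_def)
qed

lemma ordl_top:
  assumes d: "distinct xs" and S: "S \<subseteq> set xs" "S \<noteq> {}"
  shows "top_elem (ordl xs) S = hd (filter (\<lambda>x. x \<in> S) xs)"
proof -
  have "filter (\<lambda>x. x \<in> S) xs \<noteq> []" using S by (auto simp: filter_empty_conv)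
  then obtain a zs where fz: "filter (\<lambda>x. x \<in> S) xs = a # zs" by (cases "filter (\<lambda>x. x \<in> S) xs") auto
  then obtain us vs where u: "xs = us @ a # vs" "\<forall>u\<in>set us. u \<notin> S" "a \<in> S"
    by (auto simp: filter_eq_Cons_iff)
  have "\<forall>b\<in>S. b \<noteq> a \<longrightarrow> (a, b) \<in> ordl xs"
  proof (intro ballI impI)
    fix b assume b: "b \<in> S" "b \<noteq> a"
    then have "b \<in> set vs" using u S by auto
    then obtain k where k: "k < length vs" "b = vs!k" by (metis in_set_conv_nth)
    have "a = xs ! length us" using u by simp
    moreover have "b = xs ! (length us + 1 + k)" using u k by (simp add: nth_append)
    moreover have "length us + 1 + k < length xs" using u k by simp
    ultimately show "(a, b) \<in> ordl xs" unfolding ordl_def by force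
  qed
  then have "top_elem (ordl xs) S = a" using top_unique[OF ordl_po[OF d] u(3)] by blast
  then show ?thesis using fz by simp
qed

abbreviation "LA \<equiv> [0,1,2,3,4,5::nat]"
abbreviation "LB \<equiv> [0,1,2,5,4,3::nat]"

lemma topA: "S \<subseteq> {0,1,2,3,4,5} \<Longrightarrow> S \<noteq> {} \<Longrightarrow> top_elem (ordl LA) S = hd (filter (\<lambda>x. x \<in> S) LA)"
  by (rule ordl_top) auto
lemma topB: "S \<subseteq> {0,1,2,3,4,5} \<Longrightarrow> S \<noteq> {} \<Longrightarrow> top_elem (ordl LB) S = hd (filter (\<lambda>x. x \<in> S) LB)"
  by (rule ordl_top) auto

lemma poA: "priority_order {0,1,2,3,4,5} (ordl LA)" using ordl_po[of LA] by simp
lemma poB: "priority_order {0,1,2,3,4,5} (ordl LB)" using ordl_po[of LB] by (simp add: insert_commute)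

lemma rep2: "replicate 2 x = [x,x]" by (simp add: numeral_2_eq_2)

lemma lists_small:
  "walk_open_list w op 2 = [w,op]" "walk_open_list w op 3 = [w,w,op]"
  "open_walk_list w op 2 = [op,w]" "open_walk_list w op 3 = [op,op,w]"
  "compromise_list w op 3 = [w,op,w]" "compromise_list w op 4 = [w,op,op,w]"
  by (simp_all add: walk_open_list_def open_walk_list_def compromise_list_def Let_def rep2)

lemma cardA: "card {0,1,2,3,4,5::nat} = 6" by simp

lemma wo_bad: "\<not> irrelevance_accepted {0,1,2,3,4,5} (walk_open (ordl LA) (ordl LB))"
proof
  assume h: "irrelevance_accepted {0,1,2,3,4,5} (walk_open (ordl LA) (ordl LB))"
  let ?C = "walk_open (ordl LA) (ordl LB)"
  have a1: "?C {0,3,4,5} 2 = {0,5}" unfolding walk_open_def lists_small by (auto simp: ordl_top insert_Diff_if)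
  have a2: "?C {0,1,3,4} 2 = {0,1}" unfolding walk_open_def lists_small by (auto simp: ordl_top insert_Diff_if)
  have a3: "?C {0,3,4,5} 3 = {0,3,5}" unfolding walk_open_def lists_small by (auto simp: ordl_top insert_Diff_if)
  have a4: "?C {0,1,3,4} 3 = {0,1,4}" unfolding walk_open_def lists_small by (auto simp: ordl_top insert_Diff_if)
  have r: "({0,3,4,5}::nat set) - {0,5} = {0,1,3,4} - {0,1}" by auto
  have pre: "{0,3,4,5} \<noteq> {} \<and> {0,3,4,5} \<subseteq> {0,1,2,3,4,5} \<and> {0,1,3,4} \<noteq> {} \<and> {0,1,3,4} \<subseteq> {0,1,2,3,4,5}
     \<and> 1 \<le> (2::nat) \<and> 2 \<le> card {0,1,2,3,4,5::nat} - 1 \<and> rejected ?C {0,3,4,5} 2 = rejected ?C {0,1,3,4} 2"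
    unfolding a1 a2 rejected_def cardA using r by simp
  have "?C {0,3,4,5} (2+1) \<inter> rejected ?C {0,3,4,5} 2 = ?C {0,1,3,4} (2+1) \<inter> rejected ?C {0,1,3,4} 2"
    by (rule h[unfolded irrelevance_accepted_def, THEN spec, THEN spec, THEN spec, THEN mp, OF pre])
  moreover have e: "(2::nat)+1 = 3" by simp
  ultimately have eq: "({0,3,5}::nat set) \<inter> ({0,3,4,5} - {0,5}) = {0,1,4} \<inter> ({0,1,3,4} - {0,1})"
    by (simp only: a1 a2 a3 a4 rejected_def)
  have "(3::nat) \<in> {0,3,5} \<inter> ({0,3,4,5} - {0,5})" "(3::nat) \<notin> {0,1,4} \<inter> ({0,1,3,4} - {0,1})" by auto
  then show False using eq by blast
qed

lemma ow_bad: "\<not> irrelevance_accepted {0,1,2,3,4,5} (open_walk (ordl LA) (ordl LB))"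
proof
  assume h: "irrelevance_accepted {0,1,2,3,4,5} (open_walk (ordl LA) (ordl LB))"
  let ?C = "open_walk (ordl LA) (ordl LB)"
  have a1: "?C {0,3,4,5} 2 = {0,3}" unfolding open_walk_def lists_small by (auto simp: ordl_top insert_Diff_if)
  have a2: "?C {0,1,4,5} 2 = {0,1}" unfolding open_walk_def lists_small by (auto simp: ordl_top insert_Diff_if)
  have a3: "?C {0,3,4,5} 3 = {0,3,5}" unfolding open_walk_def lists_small by (auto simp: ordl_top insert_Diff_if)
  have a4: "?C {0,1,4,5} 3 = {0,1,4}" unfolding open_walk_def lists_small by (auto simp: ordl_top insert_Diff_if)
  have r: "({0,3,4,5}::nat set) - {0,3} = {0,1,4,5} - {0,1}" by auto
  have pre: "{0,3,4,5} \<noteq> {} \<and> {0,3,4,5} \<subseteq> {0,1,2,3,4,5} \<and> {0,1,4,5} \<noteq> {} \<and> {0,1,4,5} \<subseteq> {0,1,2,3,4,5}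
     \<and> 1 \<le> (2::nat) \<and> 2 \<le> card {0,1,2,3,4,5::nat} - 1 \<and> rejected ?C {0,3,4,5} 2 = rejected ?C {0,1,4,5} 2"
    unfolding a1 a2 rejected_def cardA using r by simp
  have "?C {0,3,4,5} (2+1) \<inter> rejected ?C {0,3,4,5} 2 = ?C {0,1,4,5} (2+1) \<inter> rejected ?C {0,1,4,5} 2"
    by (rule h[unfolded irrelevance_accepted_def, THEN spec, THEN spec, THEN spec, THEN mp, OF pre])
  moreover have e: "(2::nat)+1 = 3" by simp
  ultimately have eq: "({0,3,5}::nat set) \<inter> ({0,3,4,5} - {0,3}) = {0,1,4} \<inter> ({0,1,4,5} - {0,1})"
    by (simp only: a1 a2 a3 a4 rejected_def)
  have "(5::nat) \<in> {0,3,5} \<inter> ({0,3,4,5} - {0,3})" "(5::nat) \<notin> {0,1,4} \<inter> ({0,1,4,5} - {0,1})" by auto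
  then show False using eq by blast
qed

lemma co_bad: "\<not> irrelevance_accepted {0,1,2,3,4,5} (compromise (ordl LA) (ordl LB))"
proof
  assume h: "irrelevance_accepted {0,1,2,3,4,5} (compromise (ordl LA) (ordl LB))"
  let ?C = "compromise (ordl LA) (ordl LB)"
  have a1: "?C {0,1,3,4,5} 3 = {0,1,3}" unfolding compromise_def lists_small by (auto simp: ordl_top insert_Diff_if)
  have a2: "?C {0,1,2,4,5} 3 = {0,1,2}" unfolding compromise_def lists_small by (auto simp: ordl_top insert_Diff_if)
  have a3: "?C {0,1,3,4,5} 4 = {0,1,3,5}" unfolding compromise_def lists_small by (auto simp: ordl_top insert_Diff_if)
  have a4: "?C {0,1,2,4,5} 4 = {0,1,2,4}" unfolding compromise_def lists_small by (auto simp: ordl_top insert_Diff_if)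
  have r: "({0,1,3,4,5}::nat set) - {0,1,3} = {0,1,2,4,5} - {0,1,2}" by auto
  have pre: "{0,1,3,4,5} \<noteq> {} \<and> {0,1,3,4,5} \<subseteq> {0,1,2,3,4,5} \<and> {0,1,2,4,5} \<noteq> {} \<and> {0,1,2,4,5} \<subseteq> {0,1,2,3,4,5}
     \<and> 1 \<le> (3::nat) \<and> 3 \<le> card {0,1,2,3,4,5::nat} - 1 \<and> rejected ?C {0,1,3,4,5} 3 = rejected ?C {0,1,2,4,5} 3"
    unfolding a1 a2 rejected_def cardA using r by simp
  have "?C {0,1,3,4,5} (3+1) \<inter> rejected ?C {0,1,3,4,5} 3 = ?C {0,1,2,4,5} (3+1) \<inter> rejected ?C {0,1,2,4,5} 3"
    by (rule h[unfolded irrelevance_accepted_def, THEN spec, THEN spec, THEN spec, THEN mp, OF pre])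
  moreover have e: "(3::nat)+1 = 4" by simp
  ultimately have eq: "({0,1,3,5}::nat set) \<inter> ({0,1,3,4,5} - {0,1,3}) = {0,1,2,4} \<inter> ({0,1,2,4,5} - {0,1,2})"
    by (simp only: a1 a2 a3 a4 rejected_def)
  have "(5::nat) \<in> {0,1,3,5} \<inter> ({0,1,3,4,5} - {0,1,3})" "(5::nat) \<notin> {0,1,2,4} \<inter> ({0,1,2,4,5} - {0,1,2})" by auto
  then show False using eq by blast
qed


theorem proposition6:
  shows "(\<forall>(A :: 'a set) w op. finite A \<and> A \<noteq> {} \<and> priority_order A w \<and> priority_order A op \<longrightarrow>
            (\<forall>C \<in> {walk_open w op, open_walk w op, rotating w op, compromise w op}.
               capacity_filling A C \<and> gross_substitutes A C \<and> monotonicity A C)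
          \<and> irrelevance_accepted A (rotating w op) \<and> lexicographic A (rotating w op))
       \<and> (\<forall>rule \<in> {walk_open, open_walk, compromise}.
            \<exists>(A :: nat set) w op. finite A \<and> A \<noteq> {} \<and> priority_order A w \<and> priority_order A op
              \<and> \<not> irrelevance_accepted A (rule w op) \<and> \<not> lexicographic A (rule w op))"
proof (intro conjI allI impI)
  fix A :: "'a set" and w op
  assume as: "finite A \<and> A \<noteq> {} \<and> priority_order A w \<and> priority_order A op"
  then have fin: "finite A" and pw: "priority_order A w" and po: "priority_order A op" by auto
  have "capacity_filling A (walk_open w op) \<and> gross_substitutes A (walk_open w op) \<and> monotonicity A (walk_open w op)"
    by (rule rule_props[OF fin pw po len_lists(1) set_lists(1) wo_ins]) (simp add: walk_open_def)
  moreover have "capacity_filling A (open_walk w op) \<and> gross_substitutes A (open_walk w op) \<and> monotonicity A (open_walk w op)"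
    by (rule rule_props[OF fin pw po len_lists(2) set_lists(2) ow_ins]) (simp add: open_walk_def)
  moreover have "capacity_filling A (rotating w op) \<and> gross_substitutes A (rotating w op) \<and> monotonicity A (rotating w op)"
    by (rule rule_props[OF fin pw po len_lists(3) set_lists(3) rot_ins]) (simp add: rotating_def)
  moreover have "capacity_filling A (compromise w op) \<and> gross_substitutes A (compromise w op) \<and> monotonicity A (compromise w op)"
    by (rule rule_props[OF fin pw po len_lists(4) set_lists(4) co_ins]) (simp add: compromise_def)
  ultimately show "\<forall>C \<in> {walk_open w op, open_walk w op, rotating w op, compromise w op}.
               capacity_filling A C \<and> gross_substitutes A C \<and> monotonicity A C" by blast
  show "lexicographic A (rotating w op)" using rot_lexi[OF pw po] .
  then show "irrelevance_accepted A (rotating w op)" by (rule lexi_iaa)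
next
  have ne: "{0,1,2,3,4,5::nat} \<noteq> {}" "finite {0,1,2,3,4,5::nat}" by auto
  have ex: "\<exists>(A :: nat set) w op. finite A \<and> A \<noteq> {} \<and> priority_order A w \<and> priority_order A op
              \<and> \<not> irrelevance_accepted A (rule w op) \<and> \<not> lexicographic A (rule w op)"
    if "\<not> irrelevance_accepted {0,1,2,3,4,5} (rule (ordl LA) (ordl LB))" for rule :: "nat rel \<Rightarrow> nat rel \<Rightarrow> nat set \<Rightarrow> nat \<Rightarrow> nat set"
    using that ne poA poB lexi_iaa by blast
  show "\<forall>rule \<in> {walk_open, open_walk, compromise}.
            \<exists>(A :: nat set) w op. finite A \<and> A \<noteq> {} \<and> priority_order A w \<and> priority_order A op
              \<and> \<not> irrelevance_accepted A (rule w op) \<and> \<not> lexicographic A (rule w op)"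
    using ex[of walk_open, OF wo_bad] ex[of open_walk, OF ow_bad] ex[of compromise, OF co_bad] by blast
qed

end
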